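(* Let $P$ be a finite subset of a metric space with metric $\|\cdot-\cdot\|$, let $Q\subseteq P$ be finite, let $\rho\ge 0$ and let $t\ge 1$ be an integer. Let $M$ be the set of critical simplices of the filtered relaxed Delaunay complex $\mathrm{Del}^\rho(Q,P)$ (with filtration defined below). For every $x\in P$ and $\ell\in\{1,\ldots,|Q|\}$ let $D(x,\ell)$ be the $\ell$-th nearest neighbor of $x$ in $Q$ (ties broken arbitrarily); for $i\in\{0,1,\ldots,t\}$ let $\ell_x^i$ be the largest integer $\ell$ such that $\bigl|\|x-D(x,1)\|-\|x-D(x,\ell)\|\bigr|\le\rho i/t$, let $\sigma_x^i=\{D(x,1),D(x,2),\ldots,D(x,\ell_x^i)\}$, and let $W=\{\sigma_x^i : x\in P,\ i\in\{0,1,\ldots,t\}\}$. Then $M\subseteq W$.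
   Context: For $r\ge 0$, the relaxed Delaunay complex $\mathrm{Del}^r(Q,P)$ is the simplicial complex with vertex set $Q$ in which a simplex $\sigma=\{q_0,\ldots,q_s\}\subseteq Q$ belongs to $\mathrm{Del}^r(Q,P)$ iff there exists $x\in P$ such that $\|x-q_j\|\le\|x-q\|+r$ for all $q_j\in\sigma$ and all $q\in Q$. The filtration on $\mathrm{Del}^\rho(Q,P)$ takes values in $\{0,1,\ldots,t\}$: the filtration value $f(\sigma)$ of $\sigma\in\mathrm{Del}^\rho(Q,P)$ is the smallest $i\in\{0,\ldots,t\}$ such that $\sigma\in\mathrm{Del}^{\rho i/t}(Q,P)$. A simplex $\sigma$ is critical if $f(\sigma)<f(\tau)$ for every proper coface $\tau\supsetneq\sigma$ in the complex. *)

theory Defs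
  imports "HOL-Analysis.Analysis"
begin

definition relaxed_delaunay :: "'a::metric_space set \<Rightarrow> 'a set \<Rightarrow> real \<Rightarrow> 'a set set" where
  "relaxed_delaunay Q P r =
     {\<sigma>. \<sigma> \<subseteq> Q \<and> \<sigma> \<noteq> {} \<and>
          (\<exists>x\<in>P. \<forall>qj\<in>\<sigma>. \<forall>q\<in>Q. dist x qj \<le> dist x q + r)}"

definition filt_val :: "'a::metric_space set \<Rightarrow> 'a set \<Rightarrow> real \<Rightarrow> nat \<Rightarrow> 'a set \<Rightarrow> nat" where
  "filt_val Q P \<rho> t \<sigma> = (LEAST i. i \<le> t \<and> \<sigma> \<in> relaxed_delaunay Q P (\<rho> * real i / real t))"

definition critical_simplices :: "'a::metric_space set \<Rightarrow> 'a set \<Rightarrow> real \<Rightarrow> nat \<Rightarrow> 'a set set" where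
  "critical_simplices Q P \<rho> t =
     {\<sigma> \<in> relaxed_delaunay Q P \<rho>.
        \<forall>\<tau> \<in> relaxed_delaunay Q P \<rho>. \<sigma> \<subset> \<tau> \<longrightarrow> filt_val Q P \<rho> t \<sigma> < filt_val Q P \<rho> t \<tau>}"

definition nn_order :: "'a::metric_space set \<Rightarrow> 'a \<Rightarrow> (nat \<Rightarrow> 'a) \<Rightarrow> bool" where
  "nn_order Q x d \<longleftrightarrow> bij_betw d {1..card Q} Q \<and>
     (\<forall>i\<in>{1..card Q}. \<forall>j\<in>{1..card Q}. i \<le> j \<longrightarrow> dist x (d i) \<le> dist x (d j))"

definition ell :: "'a::metric_space set \<Rightarrow> real \<Rightarrow> nat \<Rightarrow> (nat \<Rightarrow> 'a) \<Rightarrow> 'a \<Rightarrow> nat \<Rightarrow> nat" where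
  "ell Q \<rho> t d x i = (GREATEST l. l \<in> {1..card Q} \<and>
       \<bar>dist x (d 1) - dist x (d l)\<bar> \<le> \<rho> * real i / real t)"

definition sigma_x :: "'a::metric_space set \<Rightarrow> real \<Rightarrow> nat \<Rightarrow> (nat \<Rightarrow> 'a) \<Rightarrow> 'a \<Rightarrow> nat \<Rightarrow> 'a set" where
  "sigma_x Q \<rho> t d x i = d ` {1..ell Q \<rho> t d x i}"

end

theory Submission
  imports Defs
begin

lemma sigma_char:
  fixes Q :: "'a::metric_space set"
  assumes fQ: "finite Q" and ne: "Q \<noteq> {}" and nn: "nn_order Q x d" and rho: "\<rho> \<ge> 0"
  shows "sigma_x Q \<rho> t d x i = {q\<in>Q. \<forall>q'\<in>Q. dist x q \<le> dist x q' + \<rho> * real i / real t}"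
proof -
  let ?r = "\<rho> * real i / real t"
  let ?n = "card Q"
  have bij: "bij_betw d {1..?n} Q" and mono: "\<And>i j. i\<in>{1..?n} \<Longrightarrow> j\<in>{1..?n} \<Longrightarrow> i \<le> j \<Longrightarrow> dist x (d i) \<le> dist x (d j)"
    using nn unfolding nn_order_def by auto
  have n1: "?n \<ge> 1" using fQ ne by (simp add: Suc_le_eq card_gt_0_iff)
  have img: "d ` {1..?n} = Q" using bij by (simp add: bij_betw_def)
  have min: "\<And>q. q \<in> Q \<Longrightarrow> dist x (d 1) \<le> dist x q"
  proof -
    fix q assume "q \<in> Q"
    then obtain j where "j \<in> {1..?n}" "q = d j" using img by blast
    then show "dist x (d 1) \<le> dist x q" using mono[of 1 j] n1 by auto
  qed
  define P' where "P' = (\<lambda>l. l \<in> {1..?n} \<and> \<bar>dist x (d 1) - dist x (d l)\<bar> \<le> ?r)"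
  have e: "ell Q \<rho> t d x i = (GREATEST l. P' l)" unfolding ell_def P'_def by simp
  have P'1: "P' 1" using n1 rho unfolding P'_def by auto
  have bnd: "\<And>l. P' l \<Longrightarrow> l \<le> ?n" unfolding P'_def by auto
  have Pe: "P' (GREATEST l. P' l)" using GreatestI_nat[of P' 1 "card Q"] P'1 bnd by blast
  have ge: "\<And>l. P' l \<Longrightarrow> l \<le> (GREATEST l. P' l)" using Greatest_le_nat[of P' _ "card Q"] bnd by blast
  define L where "L = (GREATEST l. P' l)"
  have PL: "P' L" and geL: "\<And>l. P' l \<Longrightarrow> l \<le> L" using Pe ge unfolding L_def by auto
  show ?thesis unfolding sigma_x_def e L_def[symmetric]
  proof
    show "d ` {1..L} \<subseteq> {q \<in> Q. \<forall>q'\<in>Q. dist x q \<le> dist x q' + ?r}"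
    proof
      fix q assume "q \<in> d ` {1..L}"
      then obtain l where l: "l \<in> {1..L}" "q = d l" by blast
      have Ln: "L \<in> {1..?n}" using PL unfolding P'_def by auto
      have ln: "l \<in> {1..?n}" using l Ln by auto
      have "dist x (d l) \<le> dist x (d L)" using mono[OF ln Ln] l by auto
      moreover have "dist x (d L) \<le> dist x (d 1) + ?r" using PL unfolding P'_def by auto
      moreover have "q \<in> Q" using l ln img by blast
      ultimately show "q \<in> {q \<in> Q. \<forall>q'\<in>Q. dist x q \<le> dist x q' + ?r}"
        using min l by force
    qed
  next
    show "{q \<in> Q. \<forall>q'\<in>Q. dist x q \<le> dist x q' + ?r} \<subseteq> d ` {1..L}"
    proof
      fix q assume q: "q \<in> {q \<in> Q. \<forall>q'\<in>Q. dist x q \<le> dist x q' + ?r}"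
      then obtain j where j: "j \<in> {1..?n}" "q = d j" using img by blast
      have d1Q: "d 1 \<in> Q" using img n1 by auto
      have "dist x q \<le> dist x (d 1) + ?r" using q d1Q by auto
      moreover have "dist x (d 1) \<le> dist x q" using min q by auto
      ultimately have "P' j" unfolding P'_def using j by auto
      then have "j \<le> L" by (rule geL)
      then show "q \<in> d ` {1..L}" using j by auto
    qed
  qed
qed

lemma rd_mono:
  "\<sigma> \<in> relaxed_delaunay Q P r \<Longrightarrow> r \<le> s \<Longrightarrow> \<sigma> \<in> relaxed_delaunay Q P s"
  unfolding relaxed_delaunay_def by (force intro: order_trans)

theorem lemma5:
  fixes P Q :: "'a::metric_space set" and \<rho> :: real and t :: nat
    and D :: "'a \<Rightarrow> nat \<Rightarrow> 'a"
  assumes "finite P" and "Q \<subseteq> P" and "finite Q" and "\<rho> \<ge> 0" and "t \<ge> 1"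
    and "\<forall>x\<in>P. nn_order Q x (D x)"
  shows "critical_simplices Q P \<rho> t \<subseteq>
           {sigma_x Q \<rho> t (D x) x i | x i. x \<in> P \<and> i \<in> {0..t}}"
proof
  fix \<sigma> assume c: "\<sigma> \<in> critical_simplices Q P \<rho> t"
  have sD: "\<sigma> \<in> relaxed_delaunay Q P \<rho>"
    and cr: "\<And>\<tau>. \<tau> \<in> relaxed_delaunay Q P \<rho> \<Longrightarrow> \<sigma> \<subset> \<tau> \<Longrightarrow> filt_val Q P \<rho> t \<sigma> < filt_val Q P \<rho> t \<tau>"
    using c unfolding critical_simplices_def by auto
  have tpos: "real t > 0" using assms(5) by simp
  have ex: "t \<le> t \<and> \<sigma> \<in> relaxed_delaunay Q P (\<rho> * real t / real t)" using sD tpos by simp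
  define i where "i = filt_val Q P \<rho> t \<sigma>"
  have iP: "i \<le> t \<and> \<sigma> \<in> relaxed_delaunay Q P (\<rho> * real i / real t)"
    unfolding i_def filt_val_def by (rule LeastI[of "\<lambda>i. i \<le> t \<and> \<sigma> \<in> relaxed_delaunay Q P (\<rho> * real i / real t)" t, OF ex])
  define r where "r = \<rho> * real i / real t"
  have rle: "r \<le> \<rho>" unfolding r_def using iP tpos assms(4)
    by (simp add: divide_le_eq mult_left_mono)
  from iP obtain x where x: "x \<in> P" and xs: "\<forall>qj\<in>\<sigma>. \<forall>q\<in>Q. dist x qj \<le> dist x q + r"
    and sQ: "\<sigma> \<subseteq> Q" and sne: "\<sigma> \<noteq> {}"
    unfolding relaxed_delaunay_def r_def by auto
  define S where "S = {q\<in>Q. \<forall>q'\<in>Q. dist x q \<le> dist x q' + r}"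
  have sS: "\<sigma> \<subseteq> S" using xs sQ unfolding S_def by auto
  have SD: "S \<in> relaxed_delaunay Q P r"
    unfolding relaxed_delaunay_def S_def using x sS sne S_def by blast
  have SDr: "S \<in> relaxed_delaunay Q P \<rho>" by (rule rd_mono[OF SD rle])
  have fS: "filt_val Q P \<rho> t S \<le> i"
    unfolding filt_val_def by (rule Least_le) (use iP SD r_def in auto)
  have "\<sigma> = S"
  proof (rule ccontr)
    assume "\<sigma> \<noteq> S"
    then have "\<sigma> \<subset> S" using sS by auto
    then have "i < filt_val Q P \<rho> t S" using cr[OF SDr] i_def by auto
    then show False using fS by auto
  qed
  moreover have "sigma_x Q \<rho> t (D x) x i = S"
    unfolding S_def r_def
    by (rule sigma_char) (use assms x sQ sne in auto)
  ultimately show "\<sigma> \<in> {sigma_x Q \<rho> t (D x) x i | x i. x \<in> P \<and> i \<in> {0..t}}"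
    using x iP by auto
qed

end
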